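(* Let $G$ be a group with a limiting sequence pair $(F_n)_n$, $(k_n)_n$, and let $(g_n)_{n\in\mathbb{N}}$ be any sequence of elements of $G$. Then there exists a sequence $(m_n)_{n\in\mathbb{N}}$ of natural numbers such that for every $l\in\mathbb{N}$ and every $x\in G$, $$g_1\big(g_2(\cdots g_{l-1}(g_lx^{m_l})^{m_{l-1}}\cdots)^{m_2}\big)^{m_1}\in F_l$$ implies $x=1_G$.
   Context: $\mathbb{N}=\{1,2,3,\dots\}$. For a subset $S$ of a group $G$ and $j\in\mathbb{N}$, let $\sqrt[j]{S}=\{g\in G\mid g^j\in S\}$. A limiting sequence pair for $G$ is a pair consisting of subsets $F_1\subseteq F_2\subseteq\cdots$ of $G$ and natural numbers $k_1,k_2,\dots$ such that for every $n\in\mathbb{N}$: (1) for every $g\in G$ there is $m\in\mathbb{N}$ with $gF_n\subseteq F_m$; (2) $\sqrt[k_n]{F_n}=\{1_G\}$; (3) $\sqrt[k_m]{F_n}\subseteq F_n$ for all $m\le n$. *)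

theory Defs
  imports "HOL-Algebra.Group"
begin

text \<open>Natural numbers in the paper are positive; sequences are modelled as
functions on nat whose values at index 0 are ignored.\<close>

definition group_root :: "('a, 'b) monoid_scheme \<Rightarrow> nat \<Rightarrow> 'a set \<Rightarrow> 'a set" where
  "group_root G j S = {g \<in> carrier G. g [^]\<^bsub>G\<^esub> j \<in> S}"

definition limiting_sequence_pair ::
  "('a, 'b) monoid_scheme \<Rightarrow> (nat \<Rightarrow> 'a set) \<Rightarrow> (nat \<Rightarrow> nat) \<Rightarrow> bool" where
  "limiting_sequence_pair G F k \<longleftrightarrow>
     (\<forall>n\<ge>1. F n \<subseteq> carrier G) \<and>
     (\<forall>n\<ge>1. F n \<subseteq> F (Suc n)) \<and>
     (\<forall>n\<ge>1. k n \<ge> 1) \<and>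
     (\<forall>n\<ge>1. \<forall>g\<in>carrier G. \<exists>m\<ge>1. (\<lambda>h. g \<otimes>\<^bsub>G\<^esub> h) ` F n \<subseteq> F m) \<and>
     (\<forall>n\<ge>1. group_root G (k n) (F n) = {\<one>\<^bsub>G\<^esub>}) \<and>
     (\<forall>n\<ge>1. \<forall>m. 1 \<le> m \<and> m \<le> n \<longrightarrow> group_root G (k m) (F n) \<subseteq> F n)"

text \<open>nested_word G g m l x = g_1 (g_2 ( ... (g_l x^{m_l})^{m_{l-1}} ... )^{m_2})^{m_1}\<close>
fun nested_apply :: "('a, 'b) monoid_scheme \<Rightarrow> (nat \<Rightarrow> 'a) \<Rightarrow> (nat \<Rightarrow> nat) \<Rightarrow> nat \<Rightarrow> 'a \<Rightarrow> 'a" where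
  "nested_apply G g m 0 y = y"
| "nested_apply G g m (Suc j) y = nested_apply G g m j (g (Suc j) \<otimes>\<^bsub>G\<^esub> y [^]\<^bsub>G\<^esub> m (Suc j))"

definition nested_word :: "('a, 'b) monoid_scheme \<Rightarrow> (nat \<Rightarrow> 'a) \<Rightarrow> (nat \<Rightarrow> nat) \<Rightarrow> nat \<Rightarrow> 'a \<Rightarrow> 'a" where
  "nested_word G g m l x = nested_apply G g m l x"

end

theory Submission
  imports Defs
begin

theorem lemma2p2:
  fixes G :: "('a, 'b) monoid_scheme" and F :: "nat \<Rightarrow> 'a set" and k :: "nat \<Rightarrow> nat"
    and g :: "nat \<Rightarrow> 'a"
  assumes "group G"
    and "limiting_sequence_pair G F k"
    and "\<forall>n\<ge>1. g n \<in> carrier G"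
  shows "\<exists>m :: nat \<Rightarrow> nat. (\<forall>n\<ge>1. m n \<ge> 1) \<and>
           (\<forall>l\<ge>1. \<forall>x\<in>carrier G. nested_word G g m l x \<in> F l \<longrightarrow> x = \<one>\<^bsub>G\<^esub>)"
proof -
  interpret group G by fact
  note L = assms(2)[unfolded limiting_sequence_pair_def]
  have Finc: "\<And>n. n \<ge> 1 \<Longrightarrow> F n \<subseteq> F (Suc n)" using L by simp
  have k1: "\<And>n. n \<ge> 1 \<Longrightarrow> k n \<ge> 1" using L by simp
  have Ltr: "\<And>n c. n \<ge> 1 \<Longrightarrow> c \<in> carrier G \<Longrightarrow> \<exists>m\<ge>1. (\<lambda>h. c \<otimes>\<^bsub>G\<^esub> h) ` F n \<subseteq> F m" using L by simp
  have Lroot: "\<And>n. n \<ge> 1 \<Longrightarrow> group_root G (k n) (F n) = {\<one>\<^bsub>G\<^esub>}" using L by simp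
  have Lsub: "\<And>n m. 1 \<le> m \<Longrightarrow> m \<le> n \<Longrightarrow> group_root G (k m) (F n) \<subseteq> F n" using L by simp
  have Fmono: "F a \<subseteq> F b" if "1 \<le> a" "a \<le> b" for a b
    using that(2,1)
  proof (induction b rule: dec_induct)
    case base then show ?case by simp
  next
    case (step n) then show ?case using Finc[of n] by simp
  qed
  have gc: "\<And>n. n \<ge> 1 \<Longrightarrow> g n \<in> carrier G" using assms(3) by blast
  define P where "P n M \<longleftrightarrow> n \<le> M \<and> (\<forall>j\<in>{1..n}. (\<lambda>h. inv\<^bsub>G\<^esub> (g j) \<otimes>\<^bsub>G\<^esub> h) ` F n \<subseteq> F M)" for n M
  have Pex: "\<exists>M. P n M" for n
  proof (cases "n = 0")
    case True then show ?thesis unfolding P_def by auto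
  next
    case False
    then have n1: "n \<ge> 1" by simp
    have "\<exists>M. n \<le> M \<and> (\<forall>j\<in>{1..t}. (\<lambda>h. inv\<^bsub>G\<^esub> (g j) \<otimes>\<^bsub>G\<^esub> h) ` F n \<subseteq> F M)" for t
    proof (induction t)
      case 0 then show ?case by auto
    next
      case (Suc t)
      then obtain M where M: "n \<le> M" "\<forall>j\<in>{1..t}. (\<lambda>h. inv\<^bsub>G\<^esub> (g j) \<otimes>\<^bsub>G\<^esub> h) ` F n \<subseteq> F M" by blast
      have "inv\<^bsub>G\<^esub> (g (Suc t)) \<in> carrier G" using gc by simp
      then obtain m' where m': "m' \<ge> 1" "(\<lambda>h. inv\<^bsub>G\<^esub> (g (Suc t)) \<otimes>\<^bsub>G\<^esub> h) ` F n \<subseteq> F m'"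
        using Ltr[OF n1] by blast
      have s1: "F M \<subseteq> F (max M m')" using Fmono M(1) n1 by simp
      have s2: "F m' \<subseteq> F (max M m')" using Fmono m'(1) by simp
      show ?case
      proof (intro exI conjI ballI)
        show "n \<le> max M m'" using M by simp
      next
        fix j assume "j \<in> {1..Suc t}"
        then have "j \<in> {1..t} \<or> j = Suc t" by auto
        then show "(\<lambda>h. inv\<^bsub>G\<^esub> (g j) \<otimes>\<^bsub>G\<^esub> h) ` F n \<subseteq> F (max M m')"
          using M(2) m'(2) s1 s2 by blast
      qed
    qed
    then show ?thesis unfolding P_def by blast
  qed
  define H where "H n = (LEAST M. P n M)" for n
  have HP: "P n (H n)" for n unfolding H_def by (rule LeastI_ex[OF Pex])
  have Pdown: "P n M" if "P n' M" "n \<le> n'" "n \<ge> 1" for n n' M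
  proof -
    have "F n \<subseteq> F n'" using Fmono that by simp
    have "\<forall>j\<in>{1..n}. (\<lambda>h. inv\<^bsub>G\<^esub> (g j) \<otimes>\<^bsub>G\<^esub> h) ` F n \<subseteq> F M"
    proof
      fix j assume "j \<in> {1..n}"
      then have "j \<in> {1..n'}" using that(2) by auto
      then have "(\<lambda>h. inv\<^bsub>G\<^esub> (g j) \<otimes>\<^bsub>G\<^esub> h) ` F n' \<subseteq> F M" using that(1) unfolding P_def by blast
      moreover have "(\<lambda>h. inv\<^bsub>G\<^esub> (g j) \<otimes>\<^bsub>G\<^esub> h) ` F n \<subseteq> (\<lambda>h. inv\<^bsub>G\<^esub> (g j) \<otimes>\<^bsub>G\<^esub> h) ` F n'"
        using \<open>F n \<subseteq> F n'\<close> by (rule image_mono)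
      ultimately show "(\<lambda>h. inv\<^bsub>G\<^esub> (g j) \<otimes>\<^bsub>G\<^esub> h) ` F n \<subseteq> F M" by (rule order_trans[rotated])
    qed
    moreover have "n \<le> M" using that unfolding P_def by simp
    ultimately show ?thesis unfolding P_def by simp
  qed
  have Hmono: "mono H"
  proof (rule monoI)
    fix n n' :: nat assume "n \<le> n'"
    show "H n \<le> H n'"
    proof (cases "n = 0")
      case True
      have "P 0 0" unfolding P_def by simp
      then have "H 0 = 0" unfolding H_def by (simp add: Least_le le_antisym)
      then show ?thesis using True by simp
    next
      case False
      then have "P n (H n')" using Pdown[OF HP[of n'] \<open>n \<le> n'\<close>] False by simp
      then show ?thesis unfolding H_def by (rule Least_le)
    qed
  qed
  have Hge: "n \<le> H n" for n using HP unfolding P_def by blast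
  define A where "A j l = (H ^^ j) l" for j l
  have Age: "l \<le> A j l" for j l
    unfolding A_def by (induction j) (auto intro: order_trans[OF _ Hge])
  have Amono: "A j l \<le> A j l'" if "l \<le> l'" for j l l'
    unfolding A_def using funpow_mono[OF Hmono that] .
  define m where "m n = k (A n n)" for n
  have m1: "m n \<ge> 1" if "n \<ge> 1" for n
    using k1 Age[of n n] that unfolding m_def by auto
  have napc: "nested_apply G g m j y \<in> carrier G" if "y \<in> carrier G" for j y
    using that by (induction j arbitrary: y) (auto simp: gc)
  have key: "y [^]\<^bsub>G\<^esub> m (Suc j) \<in> F (A (Suc j) l)"
    if "Suc j \<le> l" "y \<in> carrier G" "nested_apply G g m (Suc j) y \<in> F l" for j l y
    using that
  proof (induction j arbitrary: y)
    case 0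
    let ?z = "g 1 \<otimes>\<^bsub>G\<^esub> y [^]\<^bsub>G\<^esub> m 1"
    have z: "?z \<in> F l" using 0 by simp
    have "1 \<in> {1..l}" using 0 by simp
    then have "inv\<^bsub>G\<^esub> (g 1) \<otimes>\<^bsub>G\<^esub> ?z \<in> F (H l)" using HP[of l] z unfolding P_def by blast
    moreover have "inv\<^bsub>G\<^esub> (g 1) \<otimes>\<^bsub>G\<^esub> ?z = y [^]\<^bsub>G\<^esub> m 1" using 0 gc[of 1]
      by (simp add: m_assoc[symmetric])
    ultimately show ?case unfolding A_def by simp
  next
    case (Suc j)
    let ?z = "g (Suc (Suc j)) \<otimes>\<^bsub>G\<^esub> y [^]\<^bsub>G\<^esub> m (Suc (Suc j))"
    have zc: "?z \<in> carrier G" using Suc.prems gc by simp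
    have "?z [^]\<^bsub>G\<^esub> m (Suc j) \<in> F (A (Suc j) l)"
      using Suc.IH[of ?z] Suc.prems zc by simp
    moreover have "1 \<le> Suc j" "Suc j \<le> A (Suc j) l"
      using Amono[where j="Suc j" and l="Suc j" and l'=l] Age[of "Suc j" "Suc j"] Suc.prems by auto
    ultimately have "?z \<in> group_root G (k (A (Suc j) (Suc j))) (F (A (Suc j) l))"
      using zc by (simp add: group_root_def m_def[of "Suc j"])
    moreover have "A (Suc j) (Suc j) \<le> A (Suc j) l" "1 \<le> A (Suc j) (Suc j)"
      using Amono[where j="Suc j" and l="Suc j" and l'=l] Age[of "Suc j" "Suc j"] Suc.prems by auto
    ultimately have zin: "?z \<in> F (A (Suc j) l)" using Lsub by blast
    have "Suc (Suc j) \<le> A (Suc j) l" using Age[where j="Suc j" and l=l] Suc.prems by simp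
    then have "Suc (Suc j) \<in> {1..A (Suc j) l}" by simp
    then have "inv\<^bsub>G\<^esub> (g (Suc (Suc j))) \<otimes>\<^bsub>G\<^esub> ?z \<in> F (H (A (Suc j) l))"
      using HP[of "A (Suc j) l"] zin unfolding P_def by blast
    moreover have "inv\<^bsub>G\<^esub> (g (Suc (Suc j))) \<otimes>\<^bsub>G\<^esub> ?z = y [^]\<^bsub>G\<^esub> m (Suc (Suc j))"
      using Suc.prems gc[of "Suc (Suc j)"] by (simp add: m_assoc[symmetric])
    ultimately show ?case unfolding A_def by simp
  qed
  show ?thesis
  proof (intro exI[of _ m] conjI allI impI ballI)
    fix n :: nat assume "n \<ge> 1" then show "m n \<ge> 1" by (rule m1)
  next
    fix l x assume l: "l \<ge> 1" and x: "x \<in> carrier G" and w: "nested_word G g m l x \<in> F l"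
    obtain j where j: "l = Suc j" using l by (cases l) auto
    have "x [^]\<^bsub>G\<^esub> m l \<in> F (A l l)" using key[of j l x] j x w unfolding nested_word_def by simp
    then have "x \<in> group_root G (k (A l l)) (F (A l l))"
      unfolding group_root_def m_def using x by simp
    moreover have "A l l \<ge> 1" using Age[of l l] l by simp
    ultimately show "x = \<one>\<^bsub>G\<^esub>" using Lroot by blast
  qed
qed

end
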